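(* Let $n \geqslant 12$ be even and let $\lambda$ be a natural number with $2 \leqslant \lambda \leqslant \frac{n-4}{4}$. Then the partition $\left(\frac{n-2\lambda}{2},\ \lambda+2,\ 3,\ 2\times(\lambda-2),\ 1\times\frac{n-4\lambda-2}{2}\right)$ of $n$ corresponds to the eigenvalue $\lambda$.
   Context: In a partition, the notation $a\times t$ means that the part $a$ is repeated $t$ times (possibly $t=0$). An integer partition $(n_1,\dots,n_k)$ of $n$ (with $n_1\geqslant \dots\geqslant n_k\geqslant 1$, $\sum_j n_j=n$) is said to correspond to the eigenvalue $\lambda$ if $\lambda=\sum_{j=1}^k \frac{n_j(n_j-2j+1)}{2}$; this is the eigenvalue of the Transposition graph $T_n=\mathrm{Cay}(\mathrm{Sym}_n,T)$ ($T$ the set of all transpositions) associated with the irreducible character of $\mathrm{Sym}_n$ indexed by the partition. *)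

theory Defs
  imports Complex_Main
begin

definition is_partition :: "nat \<Rightarrow> nat list \<Rightarrow> bool" where
  "is_partition n p \<longleftrightarrow> sorted_wrt (\<ge>) p \<and> (\<forall>x\<in>set p. x \<ge> 1) \<and> sum_list p = n"

text \<open>The eigenvalue sum_{j=1}^k n_j (n_j - 2j + 1)/2 (list index i = j - 1).
  Each summand n_j(n_j - 2j + 1) is even, so division by 2 is exact.\<close>
definition partition_eigenvalue :: "nat list \<Rightarrow> int" where
  "partition_eigenvalue p =
     (\<Sum>i<length p. (int (p ! i) * (int (p ! i) - 2 * int (i + 1) + 1)) div 2)"

definition corresponds_to_eigenvalue :: "nat \<Rightarrow> nat list \<Rightarrow> int \<Rightarrow> bool" where
  "corresponds_to_eigenvalue n p \<mu> \<longleftrightarrow> is_partition n p \<and> partition_eigenvalue p = \<mu>"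

end

theory Submission
  imports Defs
begin

definition ev_from :: "nat \<Rightarrow> nat list \<Rightarrow> int" where
  "ev_from s p = (\<Sum>i<length p. (int (p ! i) * (int (p ! i) - 2 * int (s + i + 1) + 1)) div 2)"

lemma ev_from_Cons: "ev_from s (x # xs) = (int x * (int x - 2 * int (s + 1) + 1)) div 2 + ev_from (Suc s) xs"
  unfolding ev_from_def length_Cons sum.lessThan_Suc_shift by (simp add: algebra_simps)

lemma ev_from_Nil: "ev_from s [] = 0" by (simp add: ev_from_def)

lemma ev_from_append: "ev_from s (xs @ ys) = ev_from s xs + ev_from (s + length xs) ys"
  by (induction xs arbitrary: s) (simp_all add: ev_from_Cons ev_from_Nil)

lemma ev_from_rep2: "ev_from s (replicate l 2) = - (2 * int l * int s + int l * int l - 2 * int l)"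
proof (induction l arbitrary: s)
  case 0 then show ?case by (simp add: ev_from_Nil)
next
  case (Suc l s)
  have "ev_from (Suc s) (replicate l 2) = - (2 * int l * int (Suc s) + int l * int l - 2 * int l)"
    using Suc.IH[of "Suc s"] .
  then show ?case by (simp add: ev_from_Cons algebra_simps)
qed

lemma ev_from_rep1: "2 * ev_from s (replicate k 1) = - (2 * int k * int s + int k * int k - int k)"
proof (induction k arbitrary: s)
  case (0 s) then show ?case by (simp add: ev_from_Nil)
next
  case (Suc k s)
  have "2 * ev_from s (replicate (Suc k) 1) = 2 * (- int s) + 2 * ev_from (Suc s) (replicate k 1)"
    by (simp add: ev_from_Cons)
  also have "\<dots> = - (2 * int (Suc k) * int s + int (Suc k) * int (Suc k) - int (Suc k))"
    using Suc.IH[of "Suc s"] by (simp add: algebra_simps)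
  finally show ?case .
qed

lemma sw_rep: "sorted_wrt (\<lambda>x y. y \<le> x) (replicate k (a::nat))"
  by (induction k) auto

theorem lemma4:
  fixes n lam :: nat
  assumes "even n" and "n \<ge> 12"
    and "2 \<le> lam" and "real lam \<le> (real n - 4) / 4"
  shows "corresponds_to_eigenvalue n
           ([(n - 2 * lam) div 2, lam + 2, 3] @ replicate (lam - 2) 2
              @ replicate ((n - 4 * lam - 2) div 2) 1)
           (int lam)"
proof -
  obtain m where m: "n = 2 * m" using assms(1) by blast
  have "real (4 * lam + 4) \<le> real n" using assms(4) by simp
  hence "4 * lam + 4 \<le> n" by linarith
  define k where "k = m - 2 * lam - 1"
  have mk: "m = 2 * lam + 1 + k" "1 \<le> k" using m \<open>4 * lam + 4 \<le> n\<close> unfolding k_def by linarith+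
  obtain l where l: "lam = l + 2" using assms(3) le_Suc_ex by (metis add.commute)
  have P: "[(n - 2 * lam) div 2, lam + 2, 3] @ replicate (lam - 2) 2
              @ replicate ((n - 4 * lam - 2) div 2) 1
        = [l + 3 + k, l + 4, 3] @ replicate l 2 @ replicate k 1"
    using m mk l by simp
  have E: "partition_eigenvalue p = ev_from 0 p" for p
    unfolding partition_eigenvalue_def ev_from_def by simp
  have ev: "partition_eigenvalue ([l + 3 + k, l + 4, 3] @ replicate l 2 @ replicate k 1) = int l + 2"
  proof -
    have ev1: "2 * ((x * (x - 1)) div 2) = x * (x - 1)" for x :: int
    proof -
      have "even (x * (x - 1))" by auto
      then show ?thesis by simp
    qed
    have ev3: "2 * ((x * (x - 3)) div 2) = x * (x - 3)" for x :: int
    proof -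
      have "even (x * (x - 3))" by (cases "even x") auto
      then show ?thesis by simp
    qed
    have A: "2 * ((int (l + 3 + k) * (int (l + 3 + k) - 1)) div 2)
             = int (l + 3 + k) * (int (l + 3 + k) - 1)" by (rule ev1)
    have B: "2 * ((int (l + 4) * (int (l + 4) - 3)) div 2) = int (l + 4) * (int (l + 4) - 3)"
      by (rule ev3)
    have "2 * partition_eigenvalue ([l + 3 + k, l + 4, 3] @ replicate l 2 @ replicate k 1)
        = 2 * ((int (l + 3 + k) * (int (l + 3 + k) - 1)) div 2)
          + 2 * ((int (l + 4) * (int (l + 4) - 3)) div 2) - 6
          + 2 * ev_from (Suc (Suc (Suc 0))) (replicate l 2) + 2 * ev_from (Suc (Suc (Suc l))) (replicate k 1)"
      unfolding E by (simp add: ev_from_append ev_from_Cons ev_from_Nil algebra_simps)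
    also have "\<dots> = 2 * (int l + 2)"
      unfolding A B ev_from_rep2 ev_from_rep1 by (simp add: algebra_simps)
    finally show ?thesis by simp
  qed
  have part: "is_partition n ([l + 3 + k, l + 4, 3] @ replicate l 2 @ replicate k 1)"
    unfolding is_partition_def using m mk l
    by (auto simp: sorted_wrt_append sum_list_replicate sw_rep)
  show ?thesis unfolding P corresponds_to_eigenvalue_def using ev part l by simp
qed

end
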